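(* The following identities hold: $$\sum_{n=1}^{\infty}\frac{1}{4^n(2n+1)^2}\frac{\binom{4n}{2n}}{\binom{2n}{n}}=3-2\sqrt{2},\qquad \sum_{n=1}^{\infty}\frac{1}{4^n(2n+1)(2n+3)}\frac{\binom{4n}{2n}}{\binom{2n+2}{n+1}}=\frac{11-7\sqrt{2}}{30},$$ $$\sum_{n=1}^{\infty}\frac{1}{4^n(2n+1)(2n+5)}\frac{\binom{4n}{2n}}{\binom{2n+4}{n+2}}=\frac{172-107\sqrt{2}}{2520},\qquad \sum_{n=1}^{\infty}\frac{1}{4^n(2n+1)(2n+7)}\frac{\binom{4n}{2n}}{\binom{2n+6}{n+3}}=\frac{6808-4175\sqrt{2}}{480480}.$$ *)

theory Defs
  imports Complex_Main
begin

end

theory Submission imports Defs "HOL-Analysis.Gamma_Function" begin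

lemma cb: "real ((2*m) choose m) = fact (2*m) / (fact m)^2"
  by (subst binomial_fact) (auto simp: power2_eq_square mult_2)

definition A :: "nat \<Rightarrow> real" where
  "A n = real ((4*n) choose (2*n)) / (4^n * real ((2*n) choose n))"

lemma A_eq: "A n = fact (4*n) * (fact n)^2 / (4^n * (fact (2*n))^3)"
proof -
  have "real ((4*n) choose (2*n)) = fact (4*n) / (fact (2*n))^2"
    using cb[of "2*n"] by simp
  then show ?thesis unfolding A_def cb by (simp add: field_simps power2_eq_square power3_eq_cube)
qed

lemma A_Suc_aux:
  fixes F G H x q :: real
  assumes "F > 0" "G > 0" "H > 0" "x \<ge> 0" "q > 0"
  shows "F*((4*x+1)*(4*x+2)*(4*x+3)*(4*x+4)) * (H*(x+1))^2 / ((4*q) * (G*((2*x+1)*(2*x+2)))^3)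
     = F * H^2 / (q * G^3) * ((4*x+3)*(4*x+1) / (4*(2*x+1)^2))"
proof -
  have "2*x+1 > 0" "2*x+2>0" "x+1>0" using assms by auto
  then show ?thesis using assms
  apply (simp add: divide_simps)
  apply (simp add: algebra_simps power2_eq_square power3_eq_cube)
  done
qed

lemma A_Suc: "A (Suc n) = A n * ((4*n+3)*(4*n+1) / (4*(2*n+1)^2))"
proof -
  have f1: "fact (4 * Suc n) = (fact (4*n) :: real) * ((4*real n+1)*(4*real n+2)*(4*real n+3)*(4*real n+4))"
  proof -
    have e1: "4 * Suc n = Suc (Suc (Suc (Suc (4*n))))" by simp
    show ?thesis unfolding e1 by (simp add: fact_Suc algebra_simps)
  qed
  have f2: "fact (2 * Suc n) = (fact (2*n) :: real) * ((2*real n+1)*(2*real n+2))"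
  proof -
    have e2: "2 * Suc n = Suc (Suc (2*n))" by simp
    show ?thesis unfolding e2 by (simp add: fact_Suc algebra_simps)
  qed
  have f3: "fact (Suc n) = (fact n :: real) * (real n+1)" by (simp add: fact_Suc algebra_simps)
  have q: "(4::real)^(Suc n) = 4 * 4^n" by simp
  show ?thesis unfolding A_eq f1 f2 f3 q
    by (rule A_Suc_aux[where x="real n"]) auto
qed

definition P :: "real \<Rightarrow> nat \<Rightarrow> real" where
  "P x n = (\<Prod>k=1..n. 1 - x^2 / of_nat k^2)"

lemma P_pos: "P (1/4) n > 0"
  unfolding P_def
proof (intro prod_pos ballI)
  fix k assume "k \<in> {1..n}"
  then have "real k \<ge> 1" by simp
  then have "(1/4)^2 / real k ^2 \<le> (1/4)^2 / 1" 
    by (intro divide_left_mono) (auto simp: power_mono)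
  then show "0 < 1 - (1 / 4) ^ 2 / real k ^ 2" by (simp add: power2_eq_square)
qed

lemma A_P_aux:
  fixes a b x :: real
  assumes "b > 0" "x \<ge> 0"
  shows "a / b * ((4*x+3)*(4*x+1) / (4*(2*x+1)^2)) = a*(1-(1/2)^2/(2*x+1)^2)*(1-(1/2)^2/(2*x+2)^2) / (b*(1-(1/4)^2/(x+1)^2))"
proof -
  have h: "2*x+1 > 0" "2*x+2>0" "x+1>0" "4*x+3 > 0" "4*x+5>0" using assms by auto
  have e1: "1-(1/2)^2/(2*x+1)^2 = (4*x+1)*(4*x+3)/(4*(2*x+1)^2)" using h by (simp add: divide_simps) (simp add: algebra_simps power2_eq_square)
  have e2: "1-(1/2)^2/(2*x+2)^2 = (4*x+3)*(4*x+5)/(4*(2*x+2)^2)" using h by (simp add: divide_simps) (simp add: algebra_simps power2_eq_square)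
  have e3: "1-(1/4)^2/(x+1)^2 = (4*x+3)*(4*x+5)/(16*(x+1)^2)" using h by (simp add: divide_simps) (simp add: algebra_simps power2_eq_square)
  show ?thesis unfolding e1 e2 e3 using h assms
  apply (simp add: divide_simps)
  apply (simp add: algebra_simps power2_eq_square)
  done
qed

lemma A_P: "A n = P (1/2) (2*n) / P (1/4) n"
proof (induction n)
  case 0
  then show ?case by (simp add: A_def P_def)
next
  case (Suc n)
  have e2: "2 * Suc n = Suc (Suc (2*n))" by simp
  have p1: "P (1/2) (2 * Suc n) = P (1/2) (2*n) * (1 - (1/2)^2/ (2*real n+1)^2) * (1 - (1/2)^2/ (2*real n+2)^2)"
    unfolding e2 P_def by (simp add: algebra_simps)
  have p2: "P (1/4) (Suc n) = P (1/4) n * (1 - (1/4)^2/ (real n+1)^2)"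
    unfolding P_def by simp
  have pp: "P (1/4) n > 0" by (rule P_pos)
  show ?case unfolding A_Suc Suc p1 p2 using pp
    by (rule A_P_aux) simp
qed

lemma A_lim: "A \<longlonglongrightarrow> 1 / sqrt 2"
proof -
  have l1: "(\<lambda>n. P (1/2) n) \<longlonglongrightarrow> sin (pi * (1/2)) / (pi * (1/2))"
    unfolding P_def by (rule sin_product_formula_real') simp
  have l1': "(\<lambda>n. P (1/2) (2*n)) \<longlonglongrightarrow> sin (pi * (1/2)) / (pi * (1/2))"
    using LIMSEQ_subseq_LIMSEQ[OF l1, of "\<lambda>n. 2*n"] by (simp add: strict_mono_def o_def)
  have l2: "(\<lambda>n. P (1/4) n) \<longlonglongrightarrow> sin (pi * (1/4)) / (pi * (1/4))"
    unfolding P_def by (rule sin_product_formula_real') simp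
  have "(\<lambda>n. P (1/2) (2*n) / P (1/4) n) \<longlonglongrightarrow> (sin (pi * (1/2)) / (pi * (1/2))) / (sin (pi * (1/4)) / (pi * (1/4)))"
    by (rule tendsto_divide[OF l1' l2]) (simp add: sin_45)
  also have "(sin (pi * (1/2)) / (pi * (1/2))) / (sin (pi * (1/4)) / (pi * (1/4))) = 1 / sqrt 2"
    by (simp add: sin_45 field_simps)
  finally show ?thesis unfolding A_P .
qed


lemma tele:
  fixes G :: "nat \<Rightarrow> real"
  assumes "\<And>n. t n = G (Suc n) - G n" "G \<longlonglongrightarrow> L"
  shows "(\<lambda>k. t (Suc k)) sums (L - G 1)"
proof -
  have "(\<lambda>n. G (Suc n)) \<longlonglongrightarrow> L" using assms(2) by (rule LIMSEQ_Suc)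
  from telescope_sums[of "\<lambda>n. G (Suc n)", OF this] show ?thesis by (simp add: assms(1))
qed

lemma inv_lim: "(c::real) > 0 \<Longrightarrow> (\<lambda>n. d / (2 * real n + c)) \<longlonglongrightarrow> 0"
proof -
  assume c: "c > 0"
  have "filterlim (\<lambda>n. c + 2 * real n) at_top sequentially"
    by (rule filterlim_tendsto_add_at_top[OF tendsto_const])
       (rule filterlim_tendsto_pos_mult_at_top[OF tendsto_const _ filterlim_real_sequentially], simp)
  then have "filterlim (\<lambda>n. 2 * real n + c) at_top sequentially" by (simp add: add.commute)
  then show ?thesis by (rule real_tendsto_divide_at_top[OF tendsto_const])
qed

lemma choose_pos: "real ((2*n) choose n) > 0" by simp

lemma Bq: "real ((2*n+2) choose (n+1)) = real ((2*n) choose n) * (2*(2*real n+1)/(real n+1))"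
proof -
  have e: "2*n+2 = 2*(n+1)" by simp
  have f2: "fact (2 * Suc n) = (fact (2*n) :: real) * ((2*real n+1)*(2*real n+2))"
  proof -
    have e2: "2 * Suc n = Suc (Suc (2*n))" by simp
    show ?thesis unfolding e2 by (simp add: fact_Suc algebra_simps)
  qed
  have f3: "fact (Suc n) = (fact n :: real) * (real n+1)" by (simp add: fact_Suc algebra_simps)
  have "fact n > (0::real)" by simp
  moreover have "fact (2*n) > (0::real)" by simp
  ultimately show ?thesis unfolding e cb Suc_eq_plus1[symmetric] f2 f3
    by (simp add: divide_simps) (simp add: algebra_simps power2_eq_square)
qed

lemma Bq2: "real ((2*n+4) choose (n+2)) = real ((2*n) choose n) * (2*(2*real n+1)/(real n+1)) * (2*(2*real n+3)/(real n+2))"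
proof -
  have "(2*n+4) choose (n+2) = (2*(n+1)+2) choose ((n+1)+1)" by (rule arg_cong2[where f=binomial]) simp_all
  then have "real ((2*n+4) choose (n+2)) = real ((2*(n+1)) choose (n+1)) * (2*(2*real (n+1)+1)/(real (n+1)+1))"
    using Bq[of "n+1"] by simp
  also have "(2*(n+1)) choose (n+1) = (2*n+2) choose (n+1)" by (rule arg_cong2[where f=binomial]) simp_all
  finally show ?thesis unfolding Bq by (simp add: algebra_simps)
qed

lemma Bq3: "real ((2*n+6) choose (n+3)) = real ((2*n) choose n) * (2*(2*real n+1)/(real n+1)) * (2*(2*real n+3)/(real n+2)) * (2*(2*real n+5)/(real n+3))"
proof -
  have "(2*n+6) choose (n+3) = (2*(n+1)+4) choose ((n+1)+2)" by (rule arg_cong2[where f=binomial]) simp_all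
  then have "real ((2*n+6) choose (n+3)) = real ((2*(n+1)) choose (n+1)) * (2*(2*real (n+1)+1)/(real (n+1)+1)) * (2*(2*real (n+1)+3)/(real (n+1)+2))"
    using Bq2[of "n+1"] by simp
  also have "(2*(n+1)) choose (n+1) = (2*n+2) choose (n+1)" by (rule arg_cong2[where f=binomial]) simp_all
  finally show ?thesis unfolding Bq by (simp add: algebra_simps)
qed

lemma A1: "A 1 = 3/4" by (simp add: A_def numeral_eq_Suc binomial_Suc_Suc)

lemma ser1: "(\<lambda>k. let n = Suc k in
            1 / (4 ^ n * (2 * real n + 1) ^ 2) * (real ((4*n) choose (2*n)) / real ((2*n) choose n)))
           sums (3 - 2 * sqrt 2)"
proof -
  define G where "G n = -4 * A n" for n
  have t: "1 / (4 ^ n * (2 * real n + 1) ^ 2) * (real ((4*n) choose (2*n)) / real ((2*n) choose n)) = G (Suc n) - G n" for n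
  proof -
    have "1 / (4 ^ n * (2 * real n + 1) ^ 2) * (real ((4*n) choose (2*n)) / real ((2*n) choose n)) = A n / (2*real n+1)^2"
      unfolding A_def by simp
    also have "\<dots> = G (Suc n) - G n" unfolding G_def A_Suc
      by (simp add: divide_simps) (simp add: algebra_simps power2_eq_square)
    finally show ?thesis .
  qed
  have l: "G \<longlonglongrightarrow> -4 * (1 / sqrt 2)" unfolding G_def by (intro tendsto_intros A_lim)
  have e: "-4 * (1 / sqrt 2) - G 1 = 3 - 2 * sqrt 2"
    unfolding G_def A1 by (simp add: field_simps)
  show ?thesis using tele[of _ G, OF t l] unfolding e Let_def .
qed


lemma ser2: "(\<lambda>k. let n = Suc k in
            1 / (4 ^ n * (2 * real n + 1) * (2 * real n + 3)) * (real ((4*n) choose (2*n)) / real ((2*n+2) choose (n+1))))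
           sums ((11 - 7 * sqrt 2) / 30)"
proof -
  define R where "R n = (-7/15) + (-1/15) / (2 * real n + 1)" for n
  define G where "G n = R n * A n" for n
  have t: "1 / (4 ^ n * (2 * real n + 1) * (2 * real n + 3)) * (real ((4*n) choose (2*n)) / real ((2*n+2) choose (n+1))) = G (Suc n) - G n" for n
  proof -
    have p: "real ((2*n) choose n) > 0" by simp
    have "1 / (4 ^ n * (2 * real n + 1) * (2 * real n + 3)) * (real ((4*n) choose (2*n)) / real ((2*n+2) choose (n+1))) = A n * ((real n + 1) / (2 * (2*real n+1)^2 * (2*real n+3)))"
      unfolding A_def Bq using p by (simp add: field_simps power2_eq_square)
    also have "\<dots> = G (Suc n) - G n" unfolding G_def R_def A_Suc
      by (simp add: divide_simps) (simp add: algebra_simps power2_eq_square)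
    finally show ?thesis .
  qed
  have lR: "R \<longlonglongrightarrow> (-7/15) + 0" unfolding R_def by (intro tendsto_intros inv_lim) simp_all
  have l: "G \<longlonglongrightarrow> ((-7/15) + 0) * (1 / sqrt 2)" unfolding G_def by (intro tendsto_intros A_lim lR)
  have e: "((-7/15) + 0) * (1 / sqrt 2) - G 1 = (11 - 7 * sqrt 2) / 30"
    unfolding G_def R_def A1 by (simp add: field_simps)
  show ?thesis using tele[of _ G, OF t l] unfolding e Let_def .
qed

lemma ser3: "(\<lambda>k. let n = Suc k in
            1 / (4 ^ n * (2 * real n + 1) * (2 * real n + 5)) * (real ((4*n) choose (2*n)) / real ((2*n+4) choose (n+2))))
           sums ((172 - 107 * sqrt 2) / 2520)"
proof -
  define R where "R n = (-107/1260) + (-37/2520) / (2 * real n + 1) + (-1/168) / (2 * real n + 3)" for n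
  define G where "G n = R n * A n" for n
  have t: "1 / (4 ^ n * (2 * real n + 1) * (2 * real n + 5)) * (real ((4*n) choose (2*n)) / real ((2*n+4) choose (n+2))) = G (Suc n) - G n" for n
  proof -
    have p: "real ((2*n) choose n) > 0" by simp
    have "1 / (4 ^ n * (2 * real n + 1) * (2 * real n + 5)) * (real ((4*n) choose (2*n)) / real ((2*n+4) choose (n+2))) = A n * ((real n + 1) * (real n + 2) / (4 * (2*real n+1)^2 * (2*real n+3) * (2*real n+5)))"
      unfolding A_def Bq2 using p by (simp add: field_simps power2_eq_square)
    also have "\<dots> = G (Suc n) - G n" unfolding G_def R_def A_Suc
      by (simp add: divide_simps) (simp add: algebra_simps power2_eq_square)
    finally show ?thesis .
  qed
  have lR: "R \<longlonglongrightarrow> (-107/1260) + 0 + 0" unfolding R_def by (intro tendsto_intros inv_lim) simp_all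
  have l: "G \<longlonglongrightarrow> ((-107/1260) + 0 + 0) * (1 / sqrt 2)" unfolding G_def by (intro tendsto_intros A_lim lR)
  have e: "((-107/1260) + 0 + 0) * (1 / sqrt 2) - G 1 = (172 - 107 * sqrt 2) / 2520"
    unfolding G_def R_def A1 by (simp add: field_simps)
  show ?thesis using tele[of _ G, OF t l] unfolding e Let_def .
qed

lemma ser4: "(\<lambda>k. let n = Suc k in
            1 / (4 ^ n * (2 * real n + 1) * (2 * real n + 7)) * (real ((4*n) choose (2*n)) / real ((2*n+6) choose (n+3))))
           sums ((6808 - 4175 * sqrt 2) / 480480)"
proof -
  define R where "R n = (-835/48048) + (-1247/384384) / (2 * real n + 1) + (-101/64064) / (2 * real n + 3) + (-15/18304) / (2 * real n + 5)" for n
  define G where "G n = R n * A n" for n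
  have t: "1 / (4 ^ n * (2 * real n + 1) * (2 * real n + 7)) * (real ((4*n) choose (2*n)) / real ((2*n+6) choose (n+3))) = G (Suc n) - G n" for n
  proof -
    have p: "real ((2*n) choose n) > 0" by simp
    have "1 / (4 ^ n * (2 * real n + 1) * (2 * real n + 7)) * (real ((4*n) choose (2*n)) / real ((2*n+6) choose (n+3))) = A n * ((real n + 1) * (real n + 2) * (real n + 3) / (8 * (2*real n+1)^2 * (2*real n+3) * (2*real n+5) * (2*real n+7)))"
      unfolding A_def Bq3 using p by (simp add: field_simps power2_eq_square)
    also have "\<dots> = G (Suc n) - G n" unfolding G_def R_def A_Suc
      by (simp add: divide_simps) (simp add: algebra_simps power2_eq_square)
    finally show ?thesis .
  qed
  have lR: "R \<longlonglongrightarrow> (-835/48048) + 0 + 0 + 0" unfolding R_def by (intro tendsto_intros inv_lim) simp_all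
  have l: "G \<longlonglongrightarrow> ((-835/48048) + 0 + 0 + 0) * (1 / sqrt 2)" unfolding G_def by (intro tendsto_intros A_lim lR)
  have e: "((-835/48048) + 0 + 0 + 0) * (1 / sqrt 2) - G 1 = (6808 - 4175 * sqrt 2) / 480480"
    unfolding G_def R_def A1 by (simp add: field_simps)
  show ?thesis using tele[of _ G, OF t l] unfolding e Let_def .
qed

theorem corollary4p0p1:
  shows "((\<lambda>k. let n = Suc k in
            1 / (4 ^ n * (2 * real n + 1) ^ 2) * (real ((4*n) choose (2*n)) / real ((2*n) choose n)))
           sums (3 - 2 * sqrt 2)) \<and>
         ((\<lambda>k. let n = Suc k in
            1 / (4 ^ n * (2 * real n + 1) * (2 * real n + 3)) * (real ((4*n) choose (2*n)) / real ((2*n+2) choose (n+1))))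
           sums ((11 - 7 * sqrt 2) / 30)) \<and>
         ((\<lambda>k. let n = Suc k in
            1 / (4 ^ n * (2 * real n + 1) * (2 * real n + 5)) * (real ((4*n) choose (2*n)) / real ((2*n+4) choose (n+2))))
           sums ((172 - 107 * sqrt 2) / 2520)) \<and>
         ((\<lambda>k. let n = Suc k in
            1 / (4 ^ n * (2 * real n + 1) * (2 * real n + 7)) * (real ((4*n) choose (2*n)) / real ((2*n+6) choose (n+3))))
           sums ((6808 - 4175 * sqrt 2) / 480480))"
  using ser1 ser2 ser3 ser4 by blast

end
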